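(* Let $\mathbb{P}=\langle \mathit{PF},\Pi\rangle$ be a well-defined ground ProbLog program and let $\mathbb{P}'$ be the $\mathrm{LP}^{\mathrm{MLN}}$ program containing, for each probabilistic fact $pr::a$ in $\mathit{PF}$: the rules $\ln(pr):\ a$ and $\ln(1-pr):\ \bot\leftarrow a$ if $0<pr<1$; the rule $\alpha:\ a$ if $pr=1$; the rule $\alpha:\ \bot\leftarrow a$ if $pr=0$; and containing $\alpha:R$ for each rule $R\in\Pi$. Then $\mathbb{P}$ and $\mathbb{P}'$ have the same probability distribution over all interpretations: $P_{\mathbb{P}}(I)=P_{\mathbb{P}'}(I)$ for every interpretation $I$.
   Context: Interpretations are sets of ground atoms of a signature $\sigma$ with finitely many ground atoms. Ground atoms are divided into probabilistic atoms and derived atoms. A ground ProbLog program $\mathbb{P}=\langle\mathit{PF},\Pi\rangle$ consists of a set $\mathit{PF}$ of probabilistic facts $pr::a$ ($a$ a probabilistic atom, $pr\in[0,1]$ its probability $pr(a)$), and a set $\Pi$ of ground normal rules $A\leftarrow B_1,\dots,B_m,\mathit{not}\ B_{m+1},\dots,\mathit{not}\ B_n$ with $A$ not a probabilistic atom. A total choice $\mathit{TC}$ is a subset of the probabilistic atoms, with probability $\Pr_{\mathbb{P}}(\mathit{TC})=\prod_{a\in\mathit{TC}}pr(a)\cdot\prod_{b\notin \mathit{TC}}(1-pr(b))$ ($b$ ranging over probabilistic atoms). $\mathbb{P}$ is well-defined if for each total choice $\mathit{TC}$, $\Pi\cup\mathit{TC}$ has a total (two-valued) well-founded model. For such $\mathbb{P}$,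 $P_{\mathbb{P}}(I)=\Pr_{\mathbb{P}}(\mathit{TC})$ if there is a total choice $\mathit{TC}$ such that $I$ is the total well-founded model of $\Pi\cup\mathit{TC}$, and $0$ otherwise. A formula is negative if every atom occurrence is in the scope of negation. A rule has the form $A\leftarrow B\wedge N$ ($A$ a possibly empty disjunction of atoms, $B$ a conjunction of atoms, $N$ a negative formula; $\mathit{not}$ is $\neg$). The reduct $\Pi^I$ of a ground program consists of $A\leftarrow B$ for rules with $I\models N$; $I$ is a stable model if it is a minimal model of $\Pi^I$. An $\mathrm{LP}^{\mathrm{MLN}}$ program is a finite set of weighted rules $w:R$ ($w$ real or the symbol $\alpha$); $\Pi_I=\{w:R\mid I\models R\}$; $\mathrm{SM}[\Pi]=\{I\mid I$ stable model of the unweighted $\Pi_I\}$; $W_\Pi(I)=\exp(\sum_{w:R\in\Pi_I}w)$ if $I\in\mathrm{SM}[\Pi]$, else $0$; $P_\Pi(I)=\lim_{\alpha\to\infty}W_\Pi(I)/\sum_{J\in\mathrm{SM}[\Pi]}W_\Pi(J)$. *)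

theory Defs
  imports Complex_Main
begin

datatype 'a nrule = NRule (nhead: 'a) (npos: "'a set") (nneg: "'a set")

definition tp :: "('a \<times> 'a set) set \<Rightarrow> 'a set \<Rightarrow> 'a set" where
  "tp P X = {h. \<exists>B. (h, B) \<in> P \<and> B \<subseteq> X}"

definition least_model :: "('a \<times> 'a set) set \<Rightarrow> 'a set" where
  "least_model P = lfp (tp P)"

definition gl_op :: "'a nrule set \<Rightarrow> 'a set \<Rightarrow> 'a set" where
  "gl_op \<Pi> J = least_model {(nhead r, npos r) | r. r \<in> \<Pi> \<and> nneg r \<inter> J = {}}"

(* well-founded model via the alternating fixpoint (Van Gelder):
   true atoms = lfp of Gamma^2, non-false atoms = Gamma(true atoms) *)
definition wf_true :: "'a nrule set \<Rightarrow> 'a set" where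
  "wf_true \<Pi> = lfp (\<lambda>J. gl_op \<Pi> (gl_op \<Pi> J))"

definition wf_nonfalse :: "'a nrule set \<Rightarrow> 'a set" where
  "wf_nonfalse \<Pi> = gl_op \<Pi> (wf_true \<Pi>)"

definition wf_total :: "'a nrule set \<Rightarrow> bool" where
  "wf_total \<Pi> \<longleftrightarrow> wf_true \<Pi> = wf_nonfalse \<Pi>"

(* A ProbLog program is given by the finite set PA of probabilistic atoms, the
   probability function pr (probabilistic fact  pr a :: a  for a in PA), and
   the set of rules Pi. *)
definition problog_program :: "'a set \<Rightarrow> ('a \<Rightarrow> real) \<Rightarrow> 'a nrule set \<Rightarrow> bool" where
  "problog_program PA pr \<Pi> \<longleftrightarrow> finite PA \<and> finite \<Pi> \<and>
     (\<forall>a\<in>PA. 0 \<le> pr a \<and> pr a \<le> 1) \<and>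
     (\<forall>r\<in>\<Pi>. nhead r \<notin> PA \<and> finite (npos r) \<and> finite (nneg r))"

definition with_choice :: "'a nrule set \<Rightarrow> 'a set \<Rightarrow> 'a nrule set" where
  "with_choice \<Pi> TC = \<Pi> \<union> {NRule a {} {} | a. a \<in> TC}"

definition tc_prob :: "'a set \<Rightarrow> ('a \<Rightarrow> real) \<Rightarrow> 'a set \<Rightarrow> real" where
  "tc_prob PA pr TC = (\<Prod>a\<in>TC. pr a) * (\<Prod>b\<in>PA - TC. 1 - pr b)"

definition problog_well_defined :: "'a set \<Rightarrow> 'a nrule set \<Rightarrow> bool" where
  "problog_well_defined PA \<Pi> \<longleftrightarrow> (\<forall>TC. TC \<subseteq> PA \<longrightarrow> wf_total (with_choice \<Pi> TC))"

definition problog_prob :: "'a set \<Rightarrow> ('a \<Rightarrow> real) \<Rightarrow> 'a nrule set \<Rightarrow> 'a set \<Rightarrow> real" where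
  "problog_prob PA pr \<Pi> I =
     (if \<exists>TC. TC \<subseteq> PA \<and> wf_total (with_choice \<Pi> TC) \<and> wf_true (with_choice \<Pi> TC) = I
      then tc_prob PA pr (SOME TC. TC \<subseteq> PA \<and> wf_total (with_choice \<Pi> TC)
                                    \<and> wf_true (with_choice \<Pi> TC) = I)
      else 0)"

(* rule  A <- B \<and> N  with A a (possibly empty) disjunction of the atoms in mhead,
   B the conjunction of the atoms in mpos, and N the negative formula
   (conjunction of  not b  for b in mneg) *)
datatype 'a mrule = MRule (mhead: "'a set") (mpos: "'a set") (mneg: "'a set")

datatype weight = Hard | Soft real   (* Hard = the symbol alpha *)

fun wval :: "real \<Rightarrow> weight \<Rightarrow> real" where
  "wval \<alpha> Hard = \<alpha>"
| "wval \<alpha> (Soft w) = w"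

definition sat_neg :: "'a set \<Rightarrow> 'a mrule \<Rightarrow> bool" where
  "sat_neg I r \<longleftrightarrow> mneg r \<inter> I = {}"

definition sat_rule :: "'a set \<Rightarrow> 'a mrule \<Rightarrow> bool" where
  "sat_rule I r \<longleftrightarrow> (mpos r \<subseteq> I \<and> sat_neg I r \<longrightarrow> mhead r \<inter> I \<noteq> {})"

definition reduct :: "'a mrule set \<Rightarrow> 'a set \<Rightarrow> ('a set \<times> 'a set) set" where
  "reduct R I = {(mhead r, mpos r) | r. r \<in> R \<and> sat_neg I r}"

definition pos_model :: "'a set \<Rightarrow> ('a set \<times> 'a set) set \<Rightarrow> bool" where
  "pos_model I P \<longleftrightarrow> (\<forall>(A, B)\<in>P. B \<subseteq> I \<longrightarrow> A \<inter> I \<noteq> {})"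

definition stable_model :: "'a mrule set \<Rightarrow> 'a set \<Rightarrow> bool" where
  "stable_model R I \<longleftrightarrow> pos_model I (reduct R I) \<and>
     (\<forall>J. J \<subset> I \<longrightarrow> \<not> pos_model J (reduct R I))"

definition sat_part :: "(weight \<times> 'a mrule) set \<Rightarrow> 'a set \<Rightarrow> (weight \<times> 'a mrule) set" where
  "sat_part \<Pi> I = {wr \<in> \<Pi>. sat_rule I (snd wr)}"

definition SM :: "(weight \<times> 'a mrule) set \<Rightarrow> 'a set set" where
  "SM \<Pi> = {I. finite I \<and> stable_model (snd ` sat_part \<Pi> I) I}"

definition lpmln_W :: "(weight \<times> 'a mrule) set \<Rightarrow> real \<Rightarrow> 'a set \<Rightarrow> real" where
  "lpmln_W \<Pi> \<alpha> I = (if I \<in> SM \<Pi> then exp (\<Sum>wr\<in>sat_part \<Pi> I. wval \<alpha> (fst wr)) else 0)"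

definition lpmln_prob :: "(weight \<times> 'a mrule) set \<Rightarrow> 'a set \<Rightarrow> real" where
  "lpmln_prob \<Pi> I = Lim at_top (\<lambda>\<alpha>. lpmln_W \<Pi> \<alpha> I / (\<Sum>J\<in>SM \<Pi>. lpmln_W \<Pi> \<alpha> J))"

definition problog_to_lpmln ::
  "'a set \<Rightarrow> ('a \<Rightarrow> real) \<Rightarrow> 'a nrule set \<Rightarrow> (weight \<times> 'a mrule) set" where
  "problog_to_lpmln PA pr \<Pi> =
     {(Soft (ln (pr a)), MRule {a} {} {}) | a. a \<in> PA \<and> 0 < pr a \<and> pr a < 1}
   \<union> {(Soft (ln (1 - pr a)), MRule {} {a} {}) | a. a \<in> PA \<and> 0 < pr a \<and> pr a < 1}
   \<union> {(Hard, MRule {a} {} {}) | a. a \<in> PA \<and> pr a = 1}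
   \<union> {(Hard, MRule {} {a} {}) | a. a \<in> PA \<and> pr a = 0}
   \<union> {(Hard, MRule {nhead r} (npos r) (nneg r)) | r. r \<in> \<Pi>}"

end

theory Submission
  imports Defs
begin

lemma tp_mono: "mono (tp P)"
  unfolding mono_def tp_def by blast

lemma lm_closed: "tp P (least_model P) \<subseteq> least_model P"
  unfolding least_model_def using lfp_unfold[OF tp_mono, of P] by simp

lemma lm_lower: "tp P K \<subseteq> K \<Longrightarrow> least_model P \<subseteq> K"
  unfolding least_model_def by (rule lfp_lowerbound)

lemma lm_rule: "(h, B) \<in> P \<Longrightarrow> B \<subseteq> least_model P \<Longrightarrow> h \<in> least_model P"
  using lm_closed[of P] unfolding tp_def by blast

lemma lm_heads: "least_model P \<subseteq> fst ` P"
  by (rule lm_lower) (force simp: tp_def)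

lemma lm_mono: "P1 \<subseteq> P2 \<Longrightarrow> least_model P1 \<subseteq> least_model P2"
  by (rule lm_lower) (use lm_closed[of P2] in \<open>auto simp: tp_def\<close>)

lemma gl_anti: "J1 \<subseteq> J2 \<Longrightarrow> gl_op R J2 \<subseteq> gl_op R J1"
  unfolding gl_op_def by (rule lm_mono) blast

lemma gl2_mono: "mono (\<lambda>J. gl_op R (gl_op R J))"
  unfolding mono_def by (intro allI impI gl_anti)

lemma fix_is_wf:
  assumes "wf_total R" "gl_op R M = M"
  shows "M = wf_true R"
proof -
  have "wf_true R \<subseteq> M" unfolding wf_true_def
    by (rule lfp_lowerbound) (simp add: assms)
  hence "gl_op R M \<subseteq> gl_op R (wf_true R)" by (rule gl_anti)
  hence "M \<subseteq> wf_true R" using assms unfolding wf_total_def wf_nonfalse_def by simp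
  with \<open>wf_true R \<subseteq> M\<close> show ?thesis by blast
qed

lemma wf_fix:
  assumes "wf_total R"
  shows "gl_op R (wf_true R) = wf_true R"
  using assms unfolding wf_total_def wf_nonfalse_def by simp

lemma lim_lemma:
  fixes S :: "'b set" and f :: "'b \<Rightarrow> nat" and s :: "'b \<Rightarrow> real"
  assumes fin: "finite S" and le: "\<forall>J\<in>S. f J \<le> N" and ex: "\<exists>J\<in>S. f J = N"
  shows "((\<lambda>\<alpha>::real. (if I \<in> S then exp (\<alpha> * f I + s I) else 0) /
            (\<Sum>J\<in>S. exp (\<alpha> * f J + s J)))
     \<longlongrightarrow> (if I \<in> S \<and> f I = N then exp (s I) / (\<Sum>J\<in>{J\<in>S. f J = N}. exp (s J)) else 0)) at_top"
proof -
  define E where "E = (\<lambda>\<alpha>::real. \<lambda>J. exp (\<alpha> * (real (f J) - real N) + s J))"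
  define e where "e = (\<lambda>J. if f J = N then exp (s J) else 0)"
  have EJ: "((\<lambda>\<alpha>. E \<alpha> J) \<longlongrightarrow> e J) at_top" if "J \<in> S" for J
  proof (cases "f J = N")
    case True then show ?thesis by (simp add: E_def e_def)
  next
    case False
    hence neg: "real (f J) - real N < 0" using le that by auto
    have "LIM \<alpha> at_top. (real (f J) - real N) * \<alpha> :> at_bot"
      by (rule filterlim_tendsto_neg_mult_at_bot[OF tendsto_const neg filterlim_ident])
    hence "LIM \<alpha> at_top. s J + (real (f J) - real N) * \<alpha> :> at_bot"
      using filterlim_tendsto_add_at_bot_iff[OF tendsto_const[of "s J"]] by blast
    hence "LIM \<alpha> at_top. (real (f J) - real N) * \<alpha> + s J :> at_bot"
      by (simp add: add.commute)
    hence "((\<lambda>\<alpha>. exp ((real (f J) - real N) * \<alpha> + s J)) \<longlongrightarrow> 0) at_top"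
      by (rule filterlim_compose[OF exp_at_bot])
    then show ?thesis using False by (simp add: E_def e_def mult.commute)
  qed
  have sumlim: "((\<lambda>\<alpha>. \<Sum>J\<in>S. E \<alpha> J) \<longlongrightarrow> (\<Sum>J\<in>S. e J)) at_top"
    by (rule tendsto_sum) (rule EJ)
  have "(\<Sum>J\<in>S. e J) = (\<Sum>J\<in>{J\<in>S. f J = N}. exp (s J))"
    unfolding e_def by (simp add: sum.If_cases fin Int_def)
  moreover have pos: "(\<Sum>J\<in>{J\<in>S. f J = N}. exp (s J)) > 0"
    using ex fin by (intro sum_pos) auto
  ultimately have sumlim': "((\<lambda>\<alpha>. \<Sum>J\<in>S. E \<alpha> J) \<longlongrightarrow> (\<Sum>J\<in>{J\<in>S. f J = N}. exp (s J))) at_top"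
    using sumlim by simp
  have numlim: "((\<lambda>\<alpha>. if I \<in> S then E \<alpha> I else 0) \<longlongrightarrow> (if I \<in> S then e I else 0)) at_top"
    using EJ by (cases "I \<in> S") auto
  have "((\<lambda>\<alpha>. (if I \<in> S then E \<alpha> I else 0) / (\<Sum>J\<in>S. E \<alpha> J)) \<longlongrightarrow>
        (if I \<in> S then e I else 0) / (\<Sum>J\<in>{J\<in>S. f J = N}. exp (s J))) at_top"
    by (rule tendsto_divide[OF numlim sumlim']) (use pos in simp)
  moreover have "(if I \<in> S then E \<alpha> I else 0) / (\<Sum>J\<in>S. E \<alpha> J) =
     (if I \<in> S then exp (\<alpha> * f I + s I) else 0) / (\<Sum>J\<in>S. exp (\<alpha> * f J + s J))" for \<alpha>
  proof -
    have "E \<alpha> J = exp (\<alpha> * f J + s J) / exp (\<alpha> * N)" for J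
      unfolding E_def by (simp add: exp_diff[symmetric] algebra_simps)
    moreover have "exp (\<alpha> * N) > 0" by simp
    ultimately show ?thesis by (simp add: sum_divide_distrib[symmetric])
  qed
  moreover have "(if I \<in> S then e I else 0) / (\<Sum>J\<in>{J\<in>S. f J = N}. exp (s J)) =
    (if I \<in> S \<and> f I = N then exp (s I) / (\<Sum>J\<in>{J\<in>S. f J = N}. exp (s J)) else 0)"
    by (simp add: e_def)
  ultimately show ?thesis by simp
qed

lemma pos_model_reduct:
  "pos_model K (reduct R J) \<longleftrightarrow> (\<forall>r\<in>R. sat_neg J r \<longrightarrow> mpos r \<subseteq> K \<longrightarrow> mhead r \<inter> K \<noteq> {})"
  unfolding pos_model_def reduct_def by auto

definition progD :: "'a mrule set \<Rightarrow> 'a set \<Rightarrow> ('a \<times> 'a set) set" where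
  "progD R J = {(h, mpos r) | h r. r \<in> R \<and> sat_neg J r \<and> mhead r = {h}}"

lemma closed_progD:
  assumes "pos_model K (reduct R J)" shows "tp (progD R J) K \<subseteq> K"
proof
  fix x assume "x \<in> tp (progD R J) K"
  then obtain r where "r \<in> R" "sat_neg J r" "mhead r = {x}" "mpos r \<subseteq> K"
    unfolding tp_def progD_def by auto
  thus "x \<in> K" using assms unfolding pos_model_reduct by force
qed

lemma stable_heads:
  assumes "stable_model R I" shows "I \<subseteq> \<Union>(mhead ` R)"
proof (rule ccontr)
  assume ns: "\<not> I \<subseteq> \<Union>(mhead ` R)"
  let ?K = "I \<inter> \<Union>(mhead ` R)"
  have "pos_model I (reduct R I)" using assms unfolding stable_model_def by simp
  hence "pos_model ?K (reduct R I)" unfolding pos_model_reduct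
  proof (intro ballI impI)
    fix r assume h: "\<forall>r\<in>R. sat_neg I r \<longrightarrow> mpos r \<subseteq> I \<longrightarrow> mhead r \<inter> I \<noteq> {}"
      and r: "r \<in> R" "sat_neg I r" "mpos r \<subseteq> ?K"
    hence "mhead r \<inter> I \<noteq> {}" by auto
    moreover have "mhead r \<subseteq> \<Union>(mhead ` R)" using r by auto
    ultimately show "mhead r \<inter> ?K \<noteq> {}" by auto
  qed
  moreover have "?K \<subset> I" using ns by auto
  ultimately show False using assms unfolding stable_model_def by auto
qed

lemma stable_iff:
  assumes hd: "\<forall>r\<in>R. mhead r = {} \<or> (\<exists>h. mhead r = {h})" and sat: "\<forall>r\<in>R. sat_rule J r"
  shows "stable_model R J \<longleftrightarrow> J = least_model (progD R J)"
proof
  assume st: "stable_model R J"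
  have pmJ: "pos_model J (reduct R J)" using st unfolding stable_model_def by simp
  have LJ: "least_model (progD R J) \<subseteq> J" by (rule lm_lower[OF closed_progD[OF pmJ]])
  have "pos_model (least_model (progD R J)) (reduct R J)"
    unfolding pos_model_reduct
  proof (intro ballI impI)
    fix r assume r: "r \<in> R" "sat_neg J r" "mpos r \<subseteq> least_model (progD R J)"
    hence "mpos r \<subseteq> J" using LJ by auto
    hence "mhead r \<inter> J \<noteq> {}" using pmJ r unfolding pos_model_reduct by auto
    then obtain h where h: "mhead r = {h}" using hd r by auto
    hence "(h, mpos r) \<in> progD R J" using r unfolding progD_def by auto
    hence "h \<in> least_model (progD R J)" using r(3) by (rule lm_rule)
    thus "mhead r \<inter> least_model (progD R J) \<noteq> {}" using h by simp
  qed
  hence "\<not> least_model (progD R J) \<subset> J" using st unfolding stable_model_def by auto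
  thus "J = least_model (progD R J)" using LJ by auto
next
  assume J: "J = least_model (progD R J)"
  have pmJ: "pos_model J (reduct R J)"
    using sat unfolding pos_model_reduct sat_rule_def by auto
  have "\<not> pos_model K (reduct R J)" if "K \<subset> J" for K
  proof
    assume "pos_model K (reduct R J)"
    hence "least_model (progD R J) \<subseteq> K" by (rule lm_lower[OF closed_progD])
    thus False using that J by auto
  qed
  thus "stable_model R J" using pmJ unfolding stable_model_def by auto
qed


definition valid_tc :: "'a set \<Rightarrow> ('a \<Rightarrow> real) \<Rightarrow> 'a set \<Rightarrow> bool" where
  "valid_tc PA pr TC \<longleftrightarrow> TC \<subseteq> PA \<and> (\<forall>a\<in>PA. pr a = 1 \<longrightarrow> a \<in> TC) \<and> (\<forall>a\<in>PA. pr a = 0 \<longrightarrow> a \<notin> TC)"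

definition hardset :: "(weight \<times> 'a mrule) set \<Rightarrow> (weight \<times> 'a mrule) set" where
  "hardset P = {wr \<in> P. fst wr = Hard}"

lemma P_cases:
  assumes "(w, r) \<in> problog_to_lpmln PA pr \<Pi>"
  shows "(\<exists>a\<in>PA. r = MRule {a} {} {}) \<or> (\<exists>a\<in>PA. r = MRule {} {a} {}) \<or>
         (\<exists>r'\<in>\<Pi>. r = MRule {nhead r'} (npos r') (nneg r') \<and> w = Hard)"
  using assms unfolding problog_to_lpmln_def by auto

lemma P_rule: "r \<in> \<Pi> \<Longrightarrow> (Hard, MRule {nhead r} (npos r) (nneg r)) \<in> problog_to_lpmln PA pr \<Pi>"
  unfolding problog_to_lpmln_def by auto

lemma P_zero: "a \<in> PA \<Longrightarrow> pr a = 0 \<Longrightarrow> (Hard, MRule {} {a} {}) \<in> problog_to_lpmln PA pr \<Pi>"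
  unfolding problog_to_lpmln_def by auto

lemma P_one: "a \<in> PA \<Longrightarrow> pr a = 1 \<Longrightarrow> (Hard, MRule {a} {} {}) \<in> problog_to_lpmln PA pr \<Pi>"
  unfolding problog_to_lpmln_def by auto

lemma P_mid1: "a \<in> PA \<Longrightarrow> 0 < pr a \<Longrightarrow> pr a < 1 \<Longrightarrow> (Soft (ln (pr a)), MRule {a} {} {}) \<in> problog_to_lpmln PA pr \<Pi>"
  unfolding problog_to_lpmln_def by auto

lemma P_mid2: "a \<in> PA \<Longrightarrow> 0 < pr a \<Longrightarrow> pr a < 1 \<Longrightarrow> (Soft (ln (1 - pr a)), MRule {} {a} {}) \<in> problog_to_lpmln PA pr \<Pi>"
  unfolding problog_to_lpmln_def by auto

lemma heads_P:
  "r \<in> snd ` problog_to_lpmln PA pr \<Pi> \<Longrightarrow> mhead r = {} \<or> (\<exists>h. mhead r = {h})"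
  using P_cases by fastforce

lemma in_sat_part: "(w, r) \<in> sat_part P J \<longleftrightarrow> (w, r) \<in> P \<and> sat_rule J r"
  unfolding sat_part_def by auto


lemma R_mem: "r \<in> Q \<Longrightarrow> nneg r \<inter> J = {} \<Longrightarrow> (nhead r, npos r) \<in> {(nhead r, npos r) | r. r \<in> Q \<and> nneg r \<inter> J = {}}"
  by blast

lemma wc_rule: "r \<in> \<Pi> \<Longrightarrow> r \<in> with_choice \<Pi> TC"
  unfolding with_choice_def by simp

lemma wc_fact: "a \<in> TC \<Longrightarrow> NRule a {} {} \<in> with_choice \<Pi> TC"
  unfolding with_choice_def by blast

lemma progD_mem: "r \<in> R \<Longrightarrow> sat_neg J r \<Longrightarrow> mhead r = {h} \<Longrightarrow> (h, mpos r) \<in> progD R J"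
  unfolding progD_def by blast

lemma progD_eq:
  assumes pp: "problog_program PA pr \<Pi>"
    and hs: "hardset (problog_to_lpmln PA pr \<Pi>) \<subseteq> sat_part (problog_to_lpmln PA pr \<Pi>) J"
  shows "progD (snd ` sat_part (problog_to_lpmln PA pr \<Pi>) J) J
       = {(nhead r, npos r) | r. r \<in> with_choice \<Pi> (J \<inter> PA) \<and> nneg r \<inter> J = {}}"
    (is "?L = ?R")
proof
  show "?L \<subseteq> ?R"
  proof
    fix x assume "x \<in> ?L"
    then obtain h r where x: "x = (h, mpos r)" and r: "r \<in> snd ` sat_part (problog_to_lpmln PA pr \<Pi>) J"
      and sn: "sat_neg J r" and hh: "mhead r = {h}"
      unfolding progD_def by blast
    from r obtain w where "(w, r) \<in> sat_part (problog_to_lpmln PA pr \<Pi>) J" by auto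
    hence wr: "(w, r) \<in> problog_to_lpmln PA pr \<Pi>" and sr: "sat_rule J r"
      unfolding in_sat_part by auto
    have "(\<exists>a\<in>PA. r = MRule {a} {} {}) \<or> (\<exists>a\<in>PA. r = MRule {} {a} {}) \<or>
         (\<exists>r'\<in>\<Pi>. r = MRule {nhead r'} (npos r') (nneg r') \<and> w = Hard)"
      using wr by (rule P_cases)
    moreover
    { fix a assume r: "r = MRule {a} {} {}" "a \<in> PA"
      hence "a \<in> J" "h = a" using sr hh by (auto simp: sat_rule_def sat_neg_def)
      hence "NRule a {} {} \<in> with_choice \<Pi> (J \<inter> PA)" using r by (intro wc_fact) simp
      from R_mem[OF this, of J] have "x \<in> ?R" using r \<open>h = a\<close> unfolding x by simp }
    moreover
    { fix a assume r: "r = MRule {} {a} {}"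
      hence False using hh by simp }
    moreover
    { fix r' assume r': "r' \<in> \<Pi>" "r = MRule {nhead r'} (npos r') (nneg r')"
      hence nn: "nneg r' \<inter> J = {}" "h = nhead r'" using sn hh by (auto simp: sat_neg_def)
      from R_mem[OF wc_rule[OF r'(1)] nn(1)] have "x \<in> ?R" using r' nn unfolding x by simp }
    ultimately show "x \<in> ?R" by blast
  qed
next
  show "?R \<subseteq> ?L"
  proof
    fix x assume "x \<in> ?R"
    then obtain r where x: "x = (nhead r, npos r)" and r: "r \<in> with_choice \<Pi> (J \<inter> PA)"
      and nn: "nneg r \<inter> J = {}" by blast
    show "x \<in> ?L"
    proof (cases "r \<in> \<Pi>")
      case True
      let ?m = "MRule {nhead r} (npos r) (nneg r)"
      have "(Hard, ?m) \<in> hardset (problog_to_lpmln PA pr \<Pi>)"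
        using True P_rule unfolding hardset_def by auto
      hence "(Hard, ?m) \<in> sat_part (problog_to_lpmln PA pr \<Pi>) J" using hs by auto
      hence "?m \<in> snd ` sat_part (problog_to_lpmln PA pr \<Pi>) J" by force
      moreover have "sat_neg J ?m" using nn by (simp add: sat_neg_def Int_commute)
      ultimately have "(nhead r, mpos ?m) \<in> ?L" by (intro progD_mem) auto
      thus ?thesis unfolding x by simp
    next
      case False
      then obtain a where r': "r = NRule a {} {}" and a: "a \<in> J" "a \<in> PA"
        using r unfolding with_choice_def by auto
      have pa: "0 \<le> pr a" "pr a \<le> 1" using pp a(2) unfolding problog_program_def by auto
      let ?m = "MRule {a} {} {}"
      have "pr a \<noteq> 0"
      proof
        assume "pr a = 0"
        hence "(Hard, MRule {} {a} {}) \<in> hardset (problog_to_lpmln PA pr \<Pi>)"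
          using a P_zero unfolding hardset_def by auto
        hence "(Hard, MRule {} {a} {}) \<in> sat_part (problog_to_lpmln PA pr \<Pi>) J" using hs by auto
        thus False using a unfolding in_sat_part sat_rule_def sat_neg_def by auto
      qed
      hence "\<exists>w. (w, ?m) \<in> problog_to_lpmln PA pr \<Pi>"
      proof (cases "pr a = 1")
        case True thus ?thesis using P_one[of a PA pr \<Pi>] a(2) True by blast
      next
        case False thus ?thesis using P_mid1[of a PA pr \<Pi>] a(2) pa \<open>pr a \<noteq> 0\<close> by force
      qed
      then obtain w where "(w, ?m) \<in> problog_to_lpmln PA pr \<Pi>" by auto
      moreover have "sat_rule J ?m" using a by (simp add: sat_rule_def)
      ultimately have "(w, ?m) \<in> sat_part (problog_to_lpmln PA pr \<Pi>) J" unfolding in_sat_part by simp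
      hence "?m \<in> snd ` sat_part (problog_to_lpmln PA pr \<Pi>) J" by force
      moreover have "sat_neg J ?m" by (simp add: sat_neg_def)
      ultimately have "(a, mpos ?m) \<in> ?L" by (intro progD_mem) auto
      thus ?thesis unfolding x r' by simp
    qed
  qed
qed


lemma P_hard_cases:
  assumes "(Hard, r) \<in> problog_to_lpmln PA pr \<Pi>"
  shows "(\<exists>a\<in>PA. pr a = 1 \<and> r = MRule {a} {} {}) \<or> (\<exists>a\<in>PA. pr a = 0 \<and> r = MRule {} {a} {}) \<or>
         (\<exists>r'\<in>\<Pi>. r = MRule {nhead r'} (npos r') (nneg r'))"
  using assms unfolding problog_to_lpmln_def by auto

lemma gl_sub: "gl_op (with_choice \<Pi> TC) J \<subseteq> nhead ` \<Pi> \<union> TC"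
proof -
  have "gl_op (with_choice \<Pi> TC) J \<subseteq> fst ` {(nhead r, npos r) | r. r \<in> with_choice \<Pi> TC \<and> nneg r \<inter> J = {}}"
    unfolding gl_op_def by (rule lm_heads)
  also have "\<dots> \<subseteq> nhead ` \<Pi> \<union> TC" unfolding with_choice_def by auto
  finally show ?thesis .
qed

lemma gl_TC: "TC \<subseteq> gl_op (with_choice \<Pi> TC) J"
proof
  fix a assume "a \<in> TC"
  hence "NRule a {} {} \<in> with_choice \<Pi> TC" by (rule wc_fact)
  from R_mem[OF this, of J] show "a \<in> gl_op (with_choice \<Pi> TC) J"
    unfolding gl_op_def by (intro lm_rule) auto
qed

lemma gl_PA:
  assumes "problog_program PA pr \<Pi>" "TC \<subseteq> PA"
  shows "gl_op (with_choice \<Pi> TC) J \<inter> PA = TC"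
proof -
  have "nhead ` \<Pi> \<inter> PA = {}" using assms(1) unfolding problog_program_def by auto
  thus ?thesis using gl_sub[of \<Pi> TC J] gl_TC[of TC \<Pi> J] assms(2) by blast
qed

lemma gl_fin:
  assumes "problog_program PA pr \<Pi>" "TC \<subseteq> PA"
  shows "finite (gl_op (with_choice \<Pi> TC) J)"
proof -
  have "finite (nhead ` \<Pi> \<union> TC)" using assms unfolding problog_program_def
    by (auto intro: finite_subset)
  thus ?thesis using gl_sub by (rule finite_subset[rotated])
qed

lemma C1:
  assumes pp: "problog_program PA pr \<Pi>" and wd: "problog_well_defined PA \<Pi>"
    and J: "J \<in> SM (problog_to_lpmln PA pr \<Pi>)"
    and hs: "hardset (problog_to_lpmln PA pr \<Pi>) \<subseteq> sat_part (problog_to_lpmln PA pr \<Pi>) J"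
  shows "valid_tc PA pr (J \<inter> PA) \<and> J = wf_true (with_choice \<Pi> (J \<inter> PA))"
proof
  let ?P = "problog_to_lpmln PA pr \<Pi>"
  let ?R = "snd ` sat_part ?P J"
  have st: "stable_model ?R J" using J unfolding SM_def by simp
  have hd: "\<forall>r\<in>?R. mhead r = {} \<or> (\<exists>h. mhead r = {h})"
  proof
    fix r assume "r \<in> ?R"
    hence "r \<in> snd ` ?P" unfolding sat_part_def by auto
    thus "mhead r = {} \<or> (\<exists>h. mhead r = {h})" by (rule heads_P)
  qed
  have sat: "\<forall>r\<in>?R. sat_rule J r" unfolding sat_part_def by auto
  have "J = least_model (progD ?R J)" using st stable_iff[OF hd sat] by simp
  hence fx: "J = gl_op (with_choice \<Pi> (J \<inter> PA)) J"
    unfolding progD_eq[OF pp hs] gl_op_def .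
  have "wf_total (with_choice \<Pi> (J \<inter> PA))" using wd unfolding problog_well_defined_def by auto
  thus "J = wf_true (with_choice \<Pi> (J \<inter> PA))" using fx[symmetric] by (rule fix_is_wf)
  show "valid_tc PA pr (J \<inter> PA)" unfolding valid_tc_def
  proof (intro conjI ballI impI)
    fix a assume a: "a \<in> PA" "pr a = 1"
    hence "(Hard, MRule {a} {} {}) \<in> hardset ?P" using P_one[of a PA pr \<Pi>] unfolding hardset_def by auto
    hence "(Hard, MRule {a} {} {}) \<in> sat_part ?P J" using hs by auto
    thus "a \<in> J \<inter> PA" using a unfolding in_sat_part sat_rule_def sat_neg_def by auto
  next
    fix a assume a: "a \<in> PA" "pr a = 0"
    hence "(Hard, MRule {} {a} {}) \<in> hardset ?P" using P_zero[of a PA pr \<Pi>] unfolding hardset_def by auto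
    hence "(Hard, MRule {} {a} {}) \<in> sat_part ?P J" using hs by auto
    thus "a \<notin> J \<inter> PA" using a unfolding in_sat_part sat_rule_def sat_neg_def by auto
  qed auto
qed

lemma C2:
  assumes pp: "problog_program PA pr \<Pi>" and wd: "problog_well_defined PA \<Pi>"
    and v: "valid_tc PA pr TC"
  defines "M \<equiv> wf_true (with_choice \<Pi> TC)"
  shows "M \<in> SM (problog_to_lpmln PA pr \<Pi>) \<and>
         hardset (problog_to_lpmln PA pr \<Pi>) \<subseteq> sat_part (problog_to_lpmln PA pr \<Pi>) M \<and> M \<inter> PA = TC"
proof (intro conjI)
  let ?P = "problog_to_lpmln PA pr \<Pi>"
  let ?R = "snd ` sat_part ?P M"
  have TC: "TC \<subseteq> PA" using v unfolding valid_tc_def by auto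
  have "wf_total (with_choice \<Pi> TC)" using wd TC unfolding problog_well_defined_def by auto
  hence fx: "gl_op (with_choice \<Pi> TC) M = M" unfolding M_def by (rule wf_fix)
  show MPA: "M \<inter> PA = TC" using gl_PA[OF pp TC, of M] fx by simp
  have finM: "finite M" using gl_fin[OF pp TC, of M] fx by simp
  show hs: "hardset ?P \<subseteq> sat_part ?P M"
  proof
    fix wr assume wr: "wr \<in> hardset ?P"
    then obtain r where wr': "wr = (Hard, r)" "(Hard, r) \<in> ?P" unfolding hardset_def
      by (cases wr) auto
    have "sat_rule M r"
    proof -
      have "(\<exists>a\<in>PA. pr a = 1 \<and> r = MRule {a} {} {}) \<or> (\<exists>a\<in>PA. pr a = 0 \<and> r = MRule {} {a} {}) \<or>
         (\<exists>r'\<in>\<Pi>. r = MRule {nhead r'} (npos r') (nneg r'))" using wr'(2) by (rule P_hard_cases)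
      moreover
      { fix a assume "a \<in> PA" "pr a = 1" "r = MRule {a} {} {}"
        hence ?thesis using v MPA unfolding valid_tc_def sat_rule_def by auto }
      moreover
      { fix a assume "a \<in> PA" "pr a = 0" "r = MRule {} {a} {}"
        hence ?thesis using v MPA unfolding valid_tc_def sat_rule_def by auto }
      moreover
      { fix r' assume r': "r' \<in> \<Pi>" "r = MRule {nhead r'} (npos r') (nneg r')"
        have ?thesis unfolding sat_rule_def sat_neg_def
        proof (intro impI)
          assume "mpos r \<subseteq> M \<and> mneg r \<inter> M = {}"
          hence b: "npos r' \<subseteq> M" "nneg r' \<inter> M = {}" using r' by auto
          from R_mem[OF wc_rule[OF r'(1)] b(2)]
          have "nhead r' \<in> gl_op (with_choice \<Pi> TC) M" unfolding gl_op_def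
            by (rule lm_rule) (use b fx in \<open>simp add: gl_op_def\<close>)
          thus "mhead r \<inter> M \<noteq> {}" using r' fx by auto
        qed }
      ultimately show ?thesis by blast
    qed
    thus "wr \<in> sat_part ?P M" using wr' by (simp add: in_sat_part)
  qed
  have hd: "\<forall>r\<in>?R. mhead r = {} \<or> (\<exists>h. mhead r = {h})"
  proof
    fix r assume "r \<in> ?R"
    hence "r \<in> snd ` ?P" unfolding sat_part_def by auto
    thus "mhead r = {} \<or> (\<exists>h. mhead r = {h})" by (rule heads_P)
  qed
  have sat: "\<forall>r\<in>?R. sat_rule M r" unfolding sat_part_def by auto
  have "M = least_model (progD ?R M)"
    unfolding progD_eq[OF pp hs] MPA using fx by (simp add: gl_op_def)
  hence "stable_model ?R M" using stable_iff[OF hd sat] by simp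
  thus "M \<in> SM ?P" using finM unfolding SM_def by simp
qed


lemma P_finite:
  assumes "problog_program PA pr \<Pi>" shows "finite (problog_to_lpmln PA pr \<Pi>)"
proof -
  have fPA: "finite PA" and fPi: "finite \<Pi>" using assms unfolding problog_program_def by auto
  have e: "problog_to_lpmln PA pr \<Pi> =
     (\<lambda>a. (Soft (ln (pr a)), MRule {a} {} {})) ` {a. a \<in> PA \<and> 0 < pr a \<and> pr a < 1}
   \<union> (\<lambda>a. (Soft (ln (1 - pr a)), MRule {} {a} {})) ` {a. a \<in> PA \<and> 0 < pr a \<and> pr a < 1}
   \<union> (\<lambda>a. (Hard, MRule {a} {} {})) ` {a. a \<in> PA \<and> pr a = 1}
   \<union> (\<lambda>a. (Hard, MRule {} {a} {})) ` {a. a \<in> PA \<and> pr a = 0}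
   \<union> (\<lambda>r. (Hard, MRule {nhead r} (npos r) (nneg r))) ` \<Pi>"
    unfolding problog_to_lpmln_def by (simp only: setcompr_eq_image Collect_mem_eq)
  show ?thesis unfolding e using fPA fPi by auto
qed

lemma SM_finite:
  assumes "problog_program PA pr \<Pi>" shows "finite (SM (problog_to_lpmln PA pr \<Pi>))"
proof -
  let ?P = "problog_to_lpmln PA pr \<Pi>"
  let ?H = "\<Union>(mhead ` snd ` ?P)"
  have fH: "finite ?H"
  proof (rule finite_Union)
    show "finite (mhead ` snd ` ?P)" using P_finite[OF assms] by simp
    show "\<And>X. X \<in> mhead ` snd ` ?P \<Longrightarrow> finite X" using heads_P by fastforce
  qed
  have "SM ?P \<subseteq> Pow ?H"
  proof
    fix J assume "J \<in> SM ?P"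
    hence "stable_model (snd ` sat_part ?P J) J" unfolding SM_def by simp
    hence "J \<subseteq> \<Union>(mhead ` snd ` sat_part ?P J)" by (rule stable_heads)
    also have "\<dots> \<subseteq> ?H" unfolding sat_part_def by auto
    finally show "J \<in> Pow ?H" by simp
  qed
  thus ?thesis using fH by (meson finite_Pow_iff finite_subset)
qed

lemma W_form:
  assumes fin: "finite P"
  shows "lpmln_W P \<alpha> J = (if J \<in> SM P then exp (\<alpha> * real (card (hardset P \<inter> sat_part P J))
            + (\<Sum>wr\<in>sat_part P J - hardset P. wval 0 (fst wr))) else 0)"
proof -
  have fs: "finite (sat_part P J)" using fin unfolding sat_part_def by simp
  have "(\<Sum>wr\<in>sat_part P J. wval \<alpha> (fst wr)) =
        (\<Sum>wr\<in>sat_part P J \<inter> hardset P. wval \<alpha> (fst wr)) + (\<Sum>wr\<in>sat_part P J - hardset P. wval \<alpha> (fst wr))"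
    by (rule sum.Int_Diff[OF fs])
  also have "(\<Sum>wr\<in>sat_part P J \<inter> hardset P. wval \<alpha> (fst wr)) = (\<Sum>wr\<in>sat_part P J \<inter> hardset P. \<alpha>)"
    by (rule sum.cong) (auto simp: hardset_def)
  also have "\<dots> = \<alpha> * real (card (hardset P \<inter> sat_part P J))" by (simp add: Int_commute)
  also have "(\<Sum>wr\<in>sat_part P J - hardset P. wval \<alpha> (fst wr)) = (\<Sum>wr\<in>sat_part P J - hardset P. wval 0 (fst wr))"
  proof (rule sum.cong)
    fix wr assume "wr \<in> sat_part P J - hardset P"
    hence "fst wr \<noteq> Hard" unfolding hardset_def sat_part_def by auto
    thus "wval \<alpha> (fst wr) = wval 0 (fst wr)" by (cases "fst wr") auto
  qed simp
  finally show ?thesis unfolding lpmln_W_def by simp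
qed


lemma soft_part:
  "sat_part (problog_to_lpmln PA pr \<Pi>) J - hardset (problog_to_lpmln PA pr \<Pi>) =
     (\<lambda>a. (Soft (ln (pr a)), MRule {a} {} {})) ` ({a\<in>PA. 0 < pr a \<and> pr a < 1} \<inter> J)
   \<union> (\<lambda>a. (Soft (ln (1 - pr a)), MRule {} {a} {})) ` ({a\<in>PA. 0 < pr a \<and> pr a < 1} - J)"
  unfolding sat_part_def hardset_def problog_to_lpmln_def sat_rule_def sat_neg_def by auto

lemma exp_soft:
  assumes pp: "problog_program PA pr \<Pi>" and v: "valid_tc PA pr (J \<inter> PA)"
  shows "exp (\<Sum>wr\<in>sat_part (problog_to_lpmln PA pr \<Pi>) J - hardset (problog_to_lpmln PA pr \<Pi>). wval 0 (fst wr))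
       = tc_prob PA pr (J \<inter> PA)"
proof -
  define Mid where "Mid = {a\<in>PA. 0 < pr a \<and> pr a < 1}"
  define g1 where "g1 = (\<lambda>a. (Soft (ln (pr a)), MRule {a} {} {}))"
  define g2 where "g2 = (\<lambda>a. (Soft (ln (1 - pr a)), MRule {} {a} {}))"
  have fPA: "finite PA" and pr01: "\<forall>a\<in>PA. 0 \<le> pr a \<and> pr a \<le> 1"
    using pp unfolding problog_program_def by auto
  have fM: "finite Mid" using fPA unfolding Mid_def by simp
  have sp: "sat_part (problog_to_lpmln PA pr \<Pi>) J - hardset (problog_to_lpmln PA pr \<Pi>) =
     g1 ` (Mid \<inter> J) \<union> g2 ` (Mid - J)" unfolding Mid_def g1_def g2_def by (rule soft_part)
  have disj: "g1 ` (Mid \<inter> J) \<inter> g2 ` (Mid - J) = {}" unfolding g1_def g2_def by auto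
  have "(\<Sum>wr\<in>g1 ` (Mid \<inter> J) \<union> g2 ` (Mid - J). wval 0 (fst wr)) =
        (\<Sum>wr\<in>g1 ` (Mid \<inter> J). wval 0 (fst wr)) + (\<Sum>wr\<in>g2 ` (Mid - J). wval 0 (fst wr))"
    by (rule sum.union_disjoint) (use fM disj in auto)
  also have "(\<Sum>wr\<in>g1 ` (Mid \<inter> J). wval 0 (fst wr)) = (\<Sum>a\<in>Mid \<inter> J. ln (pr a))"
    by (subst sum.reindex) (auto simp: inj_on_def g1_def)
  also have "(\<Sum>wr\<in>g2 ` (Mid - J). wval 0 (fst wr)) = (\<Sum>a\<in>Mid - J. ln (1 - pr a))"
    by (subst sum.reindex) (auto simp: inj_on_def g2_def)
  finally have s: "(\<Sum>wr\<in>g1 ` (Mid \<inter> J) \<union> g2 ` (Mid - J). wval 0 (fst wr)) =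
      (\<Sum>a\<in>Mid \<inter> J. ln (pr a)) + (\<Sum>a\<in>Mid - J. ln (1 - pr a))" .
  have e1: "exp (\<Sum>a\<in>Mid \<inter> J. ln (pr a)) = (\<Prod>a\<in>Mid \<inter> J. pr a)"
    using fM by (simp add: exp_sum Mid_def)
  have e2: "exp (\<Sum>a\<in>Mid - J. ln (1 - pr a)) = (\<Prod>a\<in>Mid - J. 1 - pr a)"
    using fM by (simp add: exp_sum Mid_def)
  have p1: "(\<Prod>a\<in>Mid \<inter> J. pr a) = (\<Prod>a\<in>J \<inter> PA. pr a)"
  proof (rule prod.mono_neutral_left)
    show "finite (J \<inter> PA)" using fPA by simp
    show "Mid \<inter> J \<subseteq> J \<inter> PA" unfolding Mid_def by auto
    show "\<forall>a\<in>J \<inter> PA - Mid \<inter> J. pr a = 1"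
      using v pr01 unfolding valid_tc_def Mid_def by force
  qed
  have p2: "(\<Prod>a\<in>Mid - J. 1 - pr a) = (\<Prod>a\<in>PA - J \<inter> PA. 1 - pr a)"
  proof (rule prod.mono_neutral_left)
    show "finite (PA - J \<inter> PA)" using fPA by simp
    show "Mid - J \<subseteq> PA - J \<inter> PA" unfolding Mid_def by auto
    show "\<forall>a\<in>PA - J \<inter> PA - (Mid - J). 1 - pr a = 1"
      using v pr01 unfolding valid_tc_def Mid_def by force
  qed
  show ?thesis unfolding sp s exp_add e1 e2 p1 p2 tc_prob_def ..
qed

lemma tc_invalid:
  assumes pp: "problog_program PA pr \<Pi>" and "TC \<subseteq> PA" "\<not> valid_tc PA pr TC"
  shows "tc_prob PA pr TC = 0"
proof -
  have fPA: "finite PA" using pp unfolding problog_program_def by auto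
  from assms consider a where "a \<in> PA" "pr a = 1" "a \<notin> TC" | a where "a \<in> PA" "pr a = 0" "a \<in> TC"
    unfolding valid_tc_def by auto
  thus ?thesis
  proof cases
    case 1
    hence "(\<Prod>b\<in>PA - TC. 1 - pr b) = 0" using fPA by (intro prod_zero) auto
    thus ?thesis unfolding tc_prob_def by simp
  next
    case 2
    hence "(\<Prod>b\<in>TC. pr b) = 0" using fPA assms(2) by (intro prod_zero) (auto intro: finite_subset)
    thus ?thesis unfolding tc_prob_def by simp
  qed
qed

lemma tc_sum:
  assumes pp: "problog_program PA pr \<Pi>"
  shows "(\<Sum>TC\<in>{TC. valid_tc PA pr TC}. tc_prob PA pr TC) = 1"
proof -
  have fPA: "finite PA" using pp unfolding problog_program_def by auto
  have "(\<Sum>TC\<in>{TC. valid_tc PA pr TC}. tc_prob PA pr TC) = (\<Sum>TC\<in>Pow PA. tc_prob PA pr TC)"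
  proof (rule sum.mono_neutral_left)
    show "finite (Pow PA)" using fPA by simp
    show "{TC. valid_tc PA pr TC} \<subseteq> Pow PA" unfolding valid_tc_def by auto
    show "\<forall>i\<in>Pow PA - {TC. valid_tc PA pr TC}. tc_prob PA pr i = 0"
      using tc_invalid[OF pp] by auto
  qed
  also have "\<dots> = (\<Prod>a\<in>PA. pr a + (1 - pr a))"
    unfolding tc_prob_def by (rule prod_add[symmetric, OF fPA])
  also have "\<dots> = 1" by simp
  finally show ?thesis .
qed


theorem theorem4:
  fixes PA :: "'a set" and pr :: "'a \<Rightarrow> real" and \<Pi> :: "'a nrule set" and I :: "'a set"
  assumes "problog_program PA pr \<Pi>"
    and "problog_well_defined PA \<Pi>"
    and "finite I"
  shows "problog_prob PA pr \<Pi> I = lpmln_prob (problog_to_lpmln PA pr \<Pi>) I"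
proof -
  note pp = assms(1) and wd = assms(2)
  define P where "P = problog_to_lpmln PA pr \<Pi>"
  define S where "S = SM P"
  define Hd where "Hd = hardset P"
  define N where "N = card Hd"
  define f where "f = (\<lambda>J. card (Hd \<inter> sat_part P J))"
  define s where "s = (\<lambda>J. \<Sum>wr\<in>sat_part P J - Hd. wval 0 (fst wr))"
  define Full where "Full = {J\<in>S. f J = N}"
  have fP: "finite P" unfolding P_def by (rule P_finite[OF pp])
  have fS: "finite S" unfolding S_def P_def by (rule SM_finite[OF pp])
  have fHd: "finite Hd" using fP unfolding Hd_def hardset_def by simp
  have W: "lpmln_W P \<alpha> J = (if J \<in> S then exp (\<alpha> * real (f J) + s J) else 0)" for \<alpha> J
    unfolding S_def f_def s_def Hd_def by (rule W_form[OF fP])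
  have fle: "\<forall>J\<in>S. f J \<le> N" unfolding f_def N_def using fHd by (auto intro: card_mono)
  have Full_iff: "J \<in> Full \<longleftrightarrow> J \<in> S \<and> Hd \<subseteq> sat_part P J" for J
  proof -
    have "card (Hd \<inter> sat_part P J) = card Hd \<longleftrightarrow> Hd \<subseteq> sat_part P J"
    proof
      assume "card (Hd \<inter> sat_part P J) = card Hd"
      hence "Hd \<inter> sat_part P J = Hd" using fHd by (intro card_subset_eq) auto
      thus "Hd \<subseteq> sat_part P J" by auto
    next
      assume "Hd \<subseteq> sat_part P J"
      hence "Hd \<inter> sat_part P J = Hd" by auto
      thus "card (Hd \<inter> sat_part P J) = card Hd" by simp
    qed
    thus ?thesis unfolding Full_def f_def N_def by auto
  qed
  have C1': "valid_tc PA pr (J \<inter> PA) \<and> J = wf_true (with_choice \<Pi> (J \<inter> PA))" if "J \<in> Full" for J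
    using C1[OF pp wd] that unfolding Full_iff S_def Hd_def P_def by auto
  have C2': "wf_true (with_choice \<Pi> TC) \<in> Full \<and> wf_true (with_choice \<Pi> TC) \<inter> PA = TC"
    if "valid_tc PA pr TC" for TC
    using C2[OF pp wd that] unfolding Full_iff S_def Hd_def P_def by auto
  have expS: "exp (s J) = tc_prob PA pr (J \<inter> PA)" if "J \<in> Full" for J
    unfolding s_def P_def Hd_def by (rule exp_soft[OF pp]) (use C1'[OF that] in auto)
  have bij: "bij_betw (\<lambda>J. J \<inter> PA) Full {TC. valid_tc PA pr TC}"
  proof (rule bij_betw_byWitness[where f' = "\<lambda>TC. wf_true (with_choice \<Pi> TC)"])
    show "\<forall>J\<in>Full. wf_true (with_choice \<Pi> (J \<inter> PA)) = J" using C1' by auto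
    show "\<forall>TC\<in>{TC. valid_tc PA pr TC}. wf_true (with_choice \<Pi> TC) \<inter> PA = TC" using C2' by auto
    show "(\<lambda>J. J \<inter> PA) ` Full \<subseteq> {TC. valid_tc PA pr TC}" using C1' by auto
    show "(\<lambda>TC. wf_true (with_choice \<Pi> TC)) ` {TC. valid_tc PA pr TC} \<subseteq> Full" using C2' by auto
  qed
  have D: "(\<Sum>J\<in>Full. exp (s J)) = 1"
  proof -
    have "(\<Sum>J\<in>Full. exp (s J)) = (\<Sum>J\<in>Full. tc_prob PA pr (J \<inter> PA))"
      by (rule sum.cong) (auto simp: expS)
    also have "\<dots> = (\<Sum>TC\<in>{TC. valid_tc PA pr TC}. tc_prob PA pr TC)"
      by (rule sum.reindex_bij_betw[OF bij])
    also have "\<dots> = 1" by (rule tc_sum[OF pp])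
    finally show ?thesis .
  qed
  have vex: "valid_tc PA pr {a\<in>PA. 0 < pr a}" unfolding valid_tc_def by auto
  have ex: "\<exists>J\<in>S. f J = N" using C2'[OF vex] unfolding Full_def by auto
  have lim: "((\<lambda>\<alpha>::real. (if I \<in> S then exp (\<alpha> * f I + s I) else 0) /
            (\<Sum>J\<in>S. exp (\<alpha> * f J + s J)))
     \<longlongrightarrow> (if I \<in> S \<and> f I = N then exp (s I) / (\<Sum>J\<in>{J\<in>S. f J = N}. exp (s J)) else 0)) at_top"
    by (rule lim_lemma[OF fS fle ex])
  have eqf: "(\<lambda>\<alpha>. lpmln_W P \<alpha> I / (\<Sum>J\<in>SM P. lpmln_W P \<alpha> J)) =
             (\<lambda>\<alpha>::real. (if I \<in> S then exp (\<alpha> * f I + s I) else 0) / (\<Sum>J\<in>S. exp (\<alpha> * f J + s J)))"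
  proof
    fix \<alpha> :: real
    have "(\<Sum>J\<in>SM P. lpmln_W P \<alpha> J) = (\<Sum>J\<in>S. exp (\<alpha> * f J + s J))"
      unfolding S_def[symmetric] by (rule sum.cong) (auto simp: W)
    thus "lpmln_W P \<alpha> I / (\<Sum>J\<in>SM P. lpmln_W P \<alpha> J) =
          (if I \<in> S then exp (\<alpha> * f I + s I) else 0) / (\<Sum>J\<in>S. exp (\<alpha> * f J + s J))"
      by (simp add: W)
  qed
  have LP: "lpmln_prob P I = (if I \<in> Full then tc_prob PA pr (I \<inter> PA) else 0)"
  proof -
    have "lpmln_prob P I = (if I \<in> S \<and> f I = N then exp (s I) / (\<Sum>J\<in>{J\<in>S. f J = N}. exp (s J)) else 0)"
      unfolding lpmln_prob_def eqf by (rule tendsto_Lim[OF trivial_limit_at_top_linorder lim])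
    also have "\<dots> = (if I \<in> Full then tc_prob PA pr (I \<inter> PA) else 0)"
      using D expS unfolding Full_def by auto
    finally show ?thesis .
  qed
  have PL: "problog_prob PA pr \<Pi> I = (if I \<in> Full then tc_prob PA pr (I \<inter> PA) else 0)"
  proof (cases "\<exists>TC. TC \<subseteq> PA \<and> wf_total (with_choice \<Pi> TC) \<and> wf_true (with_choice \<Pi> TC) = I")
    case True
    have uniq: "TC = I \<inter> PA" if "TC \<subseteq> PA \<and> wf_total (with_choice \<Pi> TC) \<and> wf_true (with_choice \<Pi> TC) = I" for TC
    proof -
      have "gl_op (with_choice \<Pi> TC) I = I" using that wf_fix by blast
      thus ?thesis using gl_PA[OF pp, of TC I] that by simp
    qed
    have "problog_prob PA pr \<Pi> I = tc_prob PA pr (I \<inter> PA)"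
      unfolding problog_prob_def using True uniq someI_ex[OF True] by simp
    moreover have "I \<notin> Full \<Longrightarrow> tc_prob PA pr (I \<inter> PA) = 0"
    proof -
      assume nF: "I \<notin> Full"
      obtain TC where TC: "TC \<subseteq> PA \<and> wf_total (with_choice \<Pi> TC) \<and> wf_true (with_choice \<Pi> TC) = I"
        using True by blast
      have "\<not> valid_tc PA pr (I \<inter> PA)"
      proof
        assume "valid_tc PA pr (I \<inter> PA)"
        hence "wf_true (with_choice \<Pi> (I \<inter> PA)) \<in> Full" using C2' by blast
        thus False using nF TC uniq[OF TC] by simp
      qed
      thus ?thesis using tc_invalid[OF pp] by auto
    qed
    ultimately show ?thesis by auto
  next
    case False
    have "I \<notin> Full"
    proof
      assume "I \<in> Full"
      hence "valid_tc PA pr (I \<inter> PA) \<and> I = wf_true (with_choice \<Pi> (I \<inter> PA))" by (rule C1')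
      moreover have "wf_total (with_choice \<Pi> (I \<inter> PA))" using wd unfolding problog_well_defined_def by auto
      ultimately show False using False by auto
    qed
    thus ?thesis unfolding problog_prob_def using False by (simp only: if_False if_not_P)
  qed
  show ?thesis using LP PL unfolding P_def by simp
qed

end
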